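(* Let $\{Y_{\mathbf z}\}_{\mathbf z\in\mathbb Z^2}$ be arbitrary positive real numbers and $\{W_k\}_{k\in\mathbb Z}$ arbitrary positive real numbers with $W_0=1$. Then for each $\mathbf a\in\mathbb Z^2_{>0}$ and each integer $k\ge1$, $$\frac{Z^W_{\mathbf a}(|\tau|\le k)}{Z^W_{\mathbf a-\mathbf e_1}(|\tau|\le k)}\le\frac{Z^W_{\mathbf a}(\tau\ge0)}{Z^W_{\mathbf a-\mathbf e_1}(\tau\ge0)}\qquad\text{and}\qquad\frac{Z^W_{\mathbf a}(|\tau|\le k)}{Z^W_{\mathbf a-\mathbf e_2}(|\tau|\le k)}\ge\frac{Z^W_{\mathbf a}(\tau\ge0)}{Z^W_{\mathbf a-\mathbf e_2}(\tau\ge0)}.$$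
   Context: $\mathbf e_1=(1,0)$, $\mathbf e_2=(0,1)$. For $\mathbf u,\mathbf v\in\mathbb Z^2$, $\widetilde Z_{\mathbf u,\mathbf v}=\sum_{\mathbf x_\bullet}\prod_{i=1}^nY_{\mathbf x_i}$, $n=|\mathbf v-\mathbf u|_1$, summing over up-right lattice paths $\mathbf x_0=\mathbf u,\dots,\mathbf x_n=\mathbf v$ (the weight at the starting point is excluded), $\widetilde Z_{\mathbf u,\mathbf u}=1$, and $\widetilde Z_{\mathbf u,\mathbf v}=0$ if no such path exists. For a set $\mathcal K\subset\mathbb Z$ and $\mathbf v$ with positive coordinate sum, $Z^W_{\mathbf v}(\tau\in\mathcal K)=\sum_{j\in\mathcal K}W_j\widetilde Z_{(j,-j),\mathbf v}$; thus $Z^W_{\mathbf v}(|\tau|\le k)=\sum_{|j|\le k}W_j\widetilde Z_{(j,-j),\mathbf v}$ and $Z^W_{\mathbf v}(\tau\ge0)=\sum_{j\ge0}W_j\widetilde Z_{(j,-j),\mathbf v}$. *)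

theory Defs
  imports "HOL-Analysis.Analysis"
begin

type_synonym pt = "int \<times> int"

definition e1 :: pt where "e1 = (1, 0)"
definition e2 :: pt where "e2 = (0, 1)"

text \<open>An up-right path of n steps starting at u is encoded by its step list
  s (True = step e1, False = step e2); its i-th point is path_pt u s i.\<close>
definition path_pt :: "pt \<Rightarrow> bool list \<Rightarrow> nat \<Rightarrow> pt" where
  "path_pt u s i = u + (int (length (filter (\<lambda>b. b) (take i s))),
                        int (length (filter (\<lambda>b. \<not> b) (take i s))))"

definition l1dist :: "pt \<Rightarrow> pt \<Rightarrow> nat" where
  "l1dist u v = nat (\<bar>fst v - fst u\<bar> + \<bar>snd v - snd u\<bar>)"

text \<open>Point-to-point partition function, weight at the starting point excluded.\<close>
definition Ztil :: "(pt \<Rightarrow> real) \<Rightarrow> pt \<Rightarrow> pt \<Rightarrow> real" where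
  "Ztil Y u v =
     (\<Sum>s\<in>{s. length s = l1dist u v \<and> path_pt u s (l1dist u v) = v}.
        \<Prod>i\<in>{1..l1dist u v}. Y (path_pt u s i))"

text \<open>Z^W_v(tau in K) = sum over j in K of W_j * Ztil((j,-j), v).\<close>
definition ZW :: "(pt \<Rightarrow> real) \<Rightarrow> (int \<Rightarrow> real) \<Rightarrow> pt \<Rightarrow> int set \<Rightarrow> real" where
  "ZW Y W v K = infsum (\<lambda>j. W j * Ztil Y (j, -j) v) K"

end

theory Submission
  imports Defs
begin


definition cT :: "bool list \<Rightarrow> int" where "cT s = int (length (filter (\<lambda>b. b) s))"
definition cF :: "bool list \<Rightarrow> int" where "cF s = int (length (filter (\<lambda>b. \<not> b) s))"
definition Sset :: "int \<Rightarrow> int \<Rightarrow> bool list set" where "Sset m n = {s. cT s = m \<and> cF s = n}"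
definition PP :: "(pt \<Rightarrow> real) \<Rightarrow> pt \<Rightarrow> bool list \<Rightarrow> real" where
  "PP Y u s = (\<Prod>i\<in>{1..length s}. Y (path_pt u s i))"

lemma path_full: "path_pt u s (length s) = u + (cT s, cF s)"
  by (simp add: path_pt_def cT_def cF_def)

lemma len_cnt: "int (length s) = cT s + cF s"
  using sum_length_filter_compl[of "\<lambda>b. b" s] by (simp add: cT_def cF_def)

lemma cnt_nonneg: "cT s \<ge> 0" "cF s \<ge> 0" by (simp_all add: cT_def cF_def)

lemma Ztil_S: "Ztil Y u v = (\<Sum>s\<in>Sset (fst v - fst u) (snd v - snd u). PP Y u s)"
proof -
  have eq: "{s. length s = l1dist u v \<and> path_pt u s (l1dist u v) = v} = Sset (fst v - fst u) (snd v - snd u)"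
  proof (intro set_eqI iffI)
    fix s assume "s \<in> {s. length s = l1dist u v \<and> path_pt u s (l1dist u v) = v}"
    then have "length s = l1dist u v" "path_pt u s (length s) = v" by auto
    then have "v = u + (cT s, cF s)" by (metis path_full)
    then show "s \<in> Sset (fst v - fst u) (snd v - snd u)" by (auto simp: Sset_def)
  next
    fix s assume "s \<in> Sset (fst v - fst u) (snd v - snd u)"
    then have c: "cT s = fst v - fst u" "cF s = snd v - snd u" by (auto simp: Sset_def)
    have "l1dist u v = length s" using len_cnt[of s] c cnt_nonneg[of s] by (simp add: l1dist_def)
    moreover have "path_pt u s (length s) = v" using path_full[of u s] c by (simp add: prod_eq_iff)
    ultimately show "s \<in> {s. length s = l1dist u v \<and> path_pt u s (l1dist u v) = v}" by simp
  qed
  show ?thesis unfolding Ztil_def PP_def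
  proof (rule sum.cong[OF eq])
    fix x assume "x \<in> Sset (fst v - fst u) (snd v - snd u)"
    then have "x \<in> {s. length s = l1dist u v \<and> path_pt u s (l1dist u v) = v}" using eq by simp
    then have "length x = l1dist u v" by simp
    then show "(\<Prod>i\<in>{1..l1dist u v}. Y (path_pt u x i)) = (\<Prod>i\<in>{1..length x}. Y (path_pt u x i))" by simp
  qed
qed

lemma Sset_finite: "finite (Sset m n)"
proof (rule finite_subset)
  show "Sset m n \<subseteq> {xs. set xs \<subseteq> UNIV \<and> length xs = nat (m+n)}"
    using len_cnt by (auto simp: Sset_def) (metis nat_int)
  show "finite {xs::bool list. set xs \<subseteq> UNIV \<and> length xs = nat (m+n)}"
    by (rule finite_lists_length_eq) simp
qed

lemma Sset_split:
  assumes "m + n > 0"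
  shows "Sset m n = (\<lambda>s. s @ [True]) ` Sset (m-1) n \<union> (\<lambda>s. s @ [False]) ` Sset m (n-1)"
proof
  show "Sset m n \<subseteq> (\<lambda>s. s @ [True]) ` Sset (m-1) n \<union> (\<lambda>s. s @ [False]) ` Sset m (n-1)"
  proof
    fix s assume s: "s \<in> Sset m n"
    then have "s \<noteq> []" using assms by (auto simp: Sset_def cT_def cF_def)
    then obtain t b where tb: "s = t @ [b]" by (metis rev_exhaust)
    show "s \<in> (\<lambda>s. s @ [True]) ` Sset (m-1) n \<union> (\<lambda>s. s @ [False]) ` Sset m (n-1)"
    proof (cases b)
      case True
      then have "t \<in> Sset (m-1) n" using s tb by (auto simp: Sset_def cT_def cF_def)
      then show ?thesis using tb True by auto
    next
      case False
      then have "t \<in> Sset m (n-1)" using s tb by (auto simp: Sset_def cT_def cF_def)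
      then show ?thesis using tb False by auto
    qed
  qed
  show "(\<lambda>s. s @ [True]) ` Sset (m-1) n \<union> (\<lambda>s. s @ [False]) ` Sset m (n-1) \<subseteq> Sset m n"
    by (auto simp: Sset_def cT_def cF_def)
qed

lemma PP_snoc: "PP Y u (s @ [b]) = PP Y u s * Y (path_pt u (s @ [b]) (Suc (length s)))"
proof -
  have "PP Y u (s @ [b]) = Y (path_pt u (s @ [b]) (Suc (length s))) *
        (\<Prod>i\<in>{1..length s}. Y (path_pt u (s @ [b]) i))"
    unfolding PP_def by (simp add: prod.nat_ivl_Suc')
  also have "(\<Prod>i\<in>{1..length s}. Y (path_pt u (s @ [b]) i)) = PP Y u s"
    unfolding PP_def by (rule prod.cong) (auto simp: path_pt_def)
  finally show ?thesis by simp
qed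

lemma Ztil_rec:
  assumes "(fst v - fst u) + (snd v - snd u) > 0"
  shows "Ztil Y u v = Y v * (Ztil Y u (fst v - 1, snd v) + Ztil Y u (fst v, snd v - 1))"
proof -
  define m where "m = fst v - fst u"
  define n where "n = snd v - snd u"
  have mn: "m + n > 0" using assms by (simp add: m_def n_def)
  have disj: "(\<lambda>s. s @ [True]) ` Sset (m-1) n \<inter> (\<lambda>s. s @ [False]) ` Sset m (n-1) = {}" by auto
  have "Ztil Y u v = (\<Sum>s\<in>Sset m n. PP Y u s)" by (simp add: Ztil_S m_def n_def)
  also have "\<dots> = (\<Sum>s\<in>(\<lambda>s. s @ [True]) ` Sset (m-1) n. PP Y u s) + (\<Sum>s\<in>(\<lambda>s. s @ [False]) ` Sset m (n-1). PP Y u s)"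
    unfolding Sset_split[OF mn] by (rule sum.union_disjoint) (auto simp: Sset_finite)
  also have "(\<Sum>s\<in>(\<lambda>s. s @ [True]) ` Sset (m-1) n. PP Y u s) = (\<Sum>s\<in>Sset (m-1) n. PP Y u (s @ [True]))"
    by (rule sum.reindex_cong[of "\<lambda>s. s @ [True]"]) (auto simp: inj_on_def)
  also have "\<dots> = (\<Sum>s\<in>Sset (m-1) n. PP Y u s * Y v)"
  proof (rule sum.cong)
    fix s assume "s \<in> Sset (m-1) n"
    then have "path_pt u (s @ [True]) (Suc (length s)) = v"
      using path_full[of u "s @ [True]"] by (simp add: Sset_def cT_def cF_def m_def n_def prod_eq_iff)
    then show "PP Y u (s @ [True]) = PP Y u s * Y v" by (simp add: PP_snoc)
  qed simp
  also have "(\<Sum>s\<in>(\<lambda>s. s @ [False]) ` Sset m (n-1). PP Y u s) = (\<Sum>s\<in>Sset m (n-1). PP Y u (s @ [False]))"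
    by (rule sum.reindex_cong[of "\<lambda>s. s @ [False]"]) (auto simp: inj_on_def)
  also have "\<dots> = (\<Sum>s\<in>Sset m (n-1). PP Y u s * Y v)"
  proof (rule sum.cong)
    fix s assume "s \<in> Sset m (n-1)"
    then have "path_pt u (s @ [False]) (Suc (length s)) = v"
      using path_full[of u "s @ [False]"] by (simp add: Sset_def cT_def cF_def m_def n_def prod_eq_iff)
    then show "PP Y u (s @ [False]) = PP Y u s * Y v" by (simp add: PP_snoc)
  qed simp
  also have "(\<Sum>s\<in>Sset (m-1) n. PP Y u s * Y v) = Y v * Ztil Y u (fst v - 1, snd v)"
    by (simp add: Ztil_S m_def n_def sum_distrib_left mult.commute algebra_simps)
  also have "(\<Sum>s\<in>Sset m (n-1). PP Y u s * Y v) = Y v * Ztil Y u (fst v, snd v - 1)"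
    by (simp add: Ztil_S m_def n_def sum_distrib_left mult.commute algebra_simps)
  finally show ?thesis by (simp add: algebra_simps)
qed

lemma Ztil_neg: assumes "fst v - fst u < 0 \<or> snd v - snd u < 0" shows "Ztil Y u v = 0"
proof -
  have "Sset (fst v - fst u) (snd v - snd u) = {}"
  proof -
    { fix x assume "x \<in> Sset (fst v - fst u) (snd v - snd u)"
      then have False using cnt_nonneg[of x] assms by (simp add: Sset_def) }
    then show ?thesis by blast
  qed
  then show ?thesis by (simp add: Ztil_S)
qed

lemma Ztil_self: "Ztil Y u u = 1"
proof -
  have "Sset 0 0 = {[]}"
  proof (intro set_eqI iffI)
    fix x assume "x \<in> Sset 0 0"
    then have "int (length x) = 0" using len_cnt[of x] by (simp add: Sset_def)
    then show "x \<in> {[]}" by simp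
  qed (simp add: Sset_def cT_def cF_def)
  then show ?thesis by (simp add: Ztil_S PP_def)
qed

lemma Ztil_nonneg: assumes Y: "\<And>z. Y z > 0" shows "Ztil Y u v \<ge> 0"
  unfolding Ztil_def by (intro sum_nonneg prod_nonneg less_imp_le Y)



lemma Z0: assumes "x + y = 0" shows "Ztil Y (j,-j) (x,y) = (if x = j then 1 else 0)"
proof (cases "x = j")
  case True
  then have "(x,y) = (j,-j)" using assms by simp
  then show ?thesis using True Ztil_self by simp
next
  case False
  then have "x - j < 0 \<or> y - (-j) < 0" using assms by linarith
  then show ?thesis using False Ztil_neg[of "(x,y)" "(j,-j)"] by simp
qed

lemma Zrec: assumes "x + y > 0"
  shows "Ztil Y (j,-j) (x,y) = Y (x,y) * (Ztil Y (j,-j) (x-1,y) + Ztil Y (j,-j) (x,y-1))"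
  using Ztil_rec[of "(x,y)" "(j,-j)" Y] assms by simp

lemma Zzero: assumes "j > x \<or> j < -y" shows "Ztil Y (j,-j) (x,y) = 0"
  using Ztil_neg[of "(x,y)" "(j,-j)" Y] assms by auto

lemma Zpos:
  assumes Y: "\<And>z. Y z > 0"
  shows "\<forall>x y. x + y = int n \<longrightarrow> -y \<le> j \<longrightarrow> j \<le> x \<longrightarrow> Ztil Y (j,-j) (x,y) > 0"
proof (induction n)
  case 0
  then show ?case by (auto simp: Z0)
next
  case (Suc n)
  show ?case
  proof (intro allI impI)
    fix x y assume h: "x + y = int (Suc n)" "-y \<le> j" "j \<le> x"
    have r: "Ztil Y (j,-j) (x,y) = Y (x,y) * (Ztil Y (j,-j) (x-1,y) + Ztil Y (j,-j) (x,y-1))"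
      using h by (intro Zrec) simp
    have n1: "Ztil Y (j,-j) (x-1,y) \<ge> 0" "Ztil Y (j,-j) (x,y-1) \<ge> 0" using Ztil_nonneg Y by auto
    have "Ztil Y (j,-j) (x-1,y) > 0 \<or> Ztil Y (j,-j) (x,y-1) > 0"
    proof (cases "j \<le> x - 1")
      case True
      then show ?thesis using Suc.IH h by auto
    next
      case False
      then have "-(y-1) \<le> j" using h by linarith
      then show ?thesis using Suc.IH h False by auto
    qed
    then show "Ztil Y (j,-j) (x,y) > 0" unfolding r using n1 Y
      by (metis add_pos_nonneg add_nonneg_pos mult_pos_pos)
  qed
qed

lemma Zpos': "(\<And>z. Y z > 0) \<Longrightarrow> -y \<le> j \<Longrightarrow> j \<le> x \<Longrightarrow> Ztil Y (j,-j) (x,y) > 0"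
  using Zpos[of Y "nat (x+y)" j] by auto

lemma fstep:
  "Ztil Y (j,-j) (x, int (Suc n) - x) =
   Y (x, int (Suc n) - x) * (Ztil Y (j,-j) (x-1, int n - (x-1)) + Ztil Y (j,-j) (x, int n - x))"
proof -
  have a: "int (Suc n) - x = int n - (x-1)" "int (Suc n) - x - 1 = int n - x" by simp_all
  show ?thesis using Zrec[of x "int (Suc n) - x" Y j] by (simp only: a) simp
qed



lemma cross:
  assumes Y: "\<And>z. Y z > 0" and jj: "j \<le> j'"
  shows "\<forall>i l. i \<le> l \<longrightarrow> Ztil Y (j,-j) (l, int n - l) * Ztil Y (j',-j') (i, int n - i)
           \<le> Ztil Y (j,-j) (i, int n - i) * Ztil Y (j',-j') (l, int n - l)"
proof (induction n)
  case 0
  show ?case using jj by (auto simp: Z0)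
next
  case (Suc n)
  define f where "f x = Ztil Y (j,-j) (x, int n - x)" for x
  define g where "g x = Ztil Y (j',-j') (x, int n - x)" for x
  show ?case
  proof (intro allI impI)
    fix i l :: int assume il: "i \<le> l"
    show "Ztil Y (j,-j) (l, int (Suc n) - l) * Ztil Y (j',-j') (i, int (Suc n) - i)
           \<le> Ztil Y (j,-j) (i, int (Suc n) - i) * Ztil Y (j',-j') (l, int (Suc n) - l)"
    proof (cases "i = l")
      case True
      then show ?thesis by (simp add: mult.commute)
    next
      case False
      then have il': "i \<le> l - 1" using il by simp
      have h1: "f (l-1) * g (i-1) \<le> f (i-1) * g (l-1)" using Suc.IH il' unfolding f_def g_def by auto
      have h2: "f (l-1) * g i \<le> f i * g (l-1)" using Suc.IH il' unfolding f_def g_def by auto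
      have h3: "f l * g (i-1) \<le> f (i-1) * g l" using Suc.IH il unfolding f_def g_def by auto
      have h4: "f l * g i \<le> f i * g l" using Suc.IH il unfolding f_def g_def by auto
      have S: "(f (l-1) + f l) * (g (i-1) + g i) \<le> (f (i-1) + f i) * (g (l-1) + g l)"
        using h1 h2 h3 h4 by (simp only: distrib_left distrib_right)
      define Yl where "Yl = Y (l, int (Suc n) - l)"
      define Yi where "Yi = Y (i, int (Suc n) - i)"
      have "(Yl * Yi) * ((f (l-1) + f l) * (g (i-1) + g i)) \<le> (Yl * Yi) * ((f (i-1) + f i) * (g (l-1) + g l))"
        using S Y by (intro mult_left_mono) (auto simp: Yl_def Yi_def less_imp_le)
      then show ?thesis
        unfolding fstep f_def[symmetric] g_def[symmetric] Yl_def[symmetric] Yi_def[symmetric]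
        by (simp only: mult_ac)
    qed
  qed
qed

lemma cross2:
  assumes Y: "\<And>z. Y z > 0" and jj: "j \<le> j'" and xy: "x + y + 1 \<ge> 0"
  shows "Ztil Y (j,-j) (x+1, y) * Ztil Y (j',-j') (x, y+1) \<le> Ztil Y (j,-j) (x, y+1) * Ztil Y (j',-j') (x+1, y)"
proof -
  define n where "n = nat (x+y+1)"
  have n: "int n = x + y + 1" using xy by (simp add: n_def)
  have "Ztil Y (j,-j) (x+1, int n - (x+1)) * Ztil Y (j',-j') (x, int n - x)
           \<le> Ztil Y (j,-j) (x, int n - x) * Ztil Y (j',-j') (x+1, int n - (x+1))"
    using cross[OF Y jj, where n=n] by simp
  moreover have "int n - (x+1) = y" "int n - x = y + 1" using n by simp_all
  ultimately show ?thesis by simp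
qed



lemma mediant:
  fixes A B W :: "int \<Rightarrow> real"
  assumes fin: "finite K1" "finite K2"
    and mono: "\<And>j j'. j < j' \<Longrightarrow> A j * B j' \<le> A j' * B j"
    and K: "\<And>j j'. j \<in> K1 \<Longrightarrow> j' \<in> K2 \<Longrightarrow> j' < j \<Longrightarrow> j \<in> K2 \<and> j' \<in> K1"
    and W: "\<And>j. W j \<ge> 0"
  shows "(\<Sum>j\<in>K1. W j * A j) * (\<Sum>j\<in>K2. W j * B j) \<le> (\<Sum>j\<in>K2. W j * A j) * (\<Sum>j\<in>K1. W j * B j)"
proof -
  define d where "d j j' = W j * W j' * (A j * B j' - A j' * B j)" for j j'
  have E1: "(\<Sum>j\<in>K1. W j * A j) * (\<Sum>j\<in>K2. W j * B j) - (\<Sum>j\<in>K2. W j * A j) * (\<Sum>j\<in>K1. W j * B j)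
      = (\<Sum>j\<in>K1. \<Sum>j'\<in>K2. W j * A j * (W j' * B j')) - (\<Sum>j'\<in>K2. \<Sum>j\<in>K1. W j' * A j' * (W j * B j))"
    by (simp only: sum_product)
  have E2: "(\<Sum>j'\<in>K2. \<Sum>j\<in>K1. W j' * A j' * (W j * B j)) = (\<Sum>j\<in>K1. \<Sum>j'\<in>K2. W j' * A j' * (W j * B j))"
    by (rule sum.swap)
  have "(\<Sum>j\<in>K1. W j * A j) * (\<Sum>j\<in>K2. W j * B j) - (\<Sum>j\<in>K2. W j * A j) * (\<Sum>j\<in>K1. W j * B j)
     = (\<Sum>j\<in>K1. \<Sum>j'\<in>K2. d j j')"
    unfolding E1 E2 sum_subtractf[symmetric] by (intro sum.cong refl) (simp add: d_def algebra_simps)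
  also have "\<dots> = (\<Sum>(j,j')\<in>K1 \<times> K2. d j j')" by (rule sum.cartesian_product)
  also have "\<dots> = (\<Sum>(j,j')\<in>(K1 \<times> K2 - (K1\<inter>K2) \<times> (K1\<inter>K2)). d j j') + (\<Sum>(j,j')\<in>(K1\<inter>K2) \<times> (K1\<inter>K2). d j j')"
    by (rule sum.subset_diff) (use fin in auto)
  finally have D: "(\<Sum>j\<in>K1. W j * A j) * (\<Sum>j\<in>K2. W j * B j) - (\<Sum>j\<in>K2. W j * A j) * (\<Sum>j\<in>K1. W j * B j)
     = (\<Sum>(j,j')\<in>(K1 \<times> K2 - (K1\<inter>K2) \<times> (K1\<inter>K2)). d j j') + (\<Sum>(j,j')\<in>(K1\<inter>K2) \<times> (K1\<inter>K2). d j j')" .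
  have Z: "(\<Sum>(j,j')\<in>(K1\<inter>K2) \<times> (K1\<inter>K2). d j j') = 0"
  proof -
    let ?I = "K1 \<inter> K2"
    have "(\<Sum>(j,j')\<in>?I \<times> ?I. d j j') = (\<Sum>j\<in>?I. \<Sum>j'\<in>?I. d j j')" by (rule sum.cartesian_product[symmetric])
    moreover have "(\<Sum>j\<in>?I. \<Sum>j'\<in>?I. d j j') = (\<Sum>j'\<in>?I. \<Sum>j\<in>?I. d j j')" by (rule sum.swap)
    moreover have "(\<Sum>j'\<in>?I. \<Sum>j\<in>?I. d j j') = (\<Sum>j'\<in>?I. \<Sum>j\<in>?I. - d j' j)"
      by (intro sum.cong refl) (simp add: d_def algebra_simps)
    moreover have "(\<Sum>j'\<in>?I. \<Sum>j\<in>?I. - d j' j) = - (\<Sum>j'\<in>?I. \<Sum>j\<in>?I. d j' j)"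
      by (simp only: sum_negf)
    ultimately show ?thesis by linarith
  qed
  have N: "(\<Sum>(j,j')\<in>(K1 \<times> K2 - (K1\<inter>K2) \<times> (K1\<inter>K2)). d j j') \<le> 0"
  proof (rule sum_nonpos)
    fix p assume p: "p \<in> K1 \<times> K2 - (K1\<inter>K2) \<times> (K1\<inter>K2)"
    obtain j j' where jj: "p = (j,j')" by force
    have "j \<in> K1" "j' \<in> K2" "\<not> (j \<in> K2 \<and> j' \<in> K1)" using p jj by auto
    then have "j \<le> j'" using K[of j j'] by linarith
    then have "j < j' \<or> j = j'" by auto
    then have "d j j' \<le> 0"
    proof
      assume "j < j'"
      then show ?thesis using mono[of j j'] W[of j] W[of j'] unfolding d_def
        by (intro mult_nonneg_nonpos) auto
    qed (simp add: d_def)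
    then show "(case p of (j,j') \<Rightarrow> d j j') \<le> 0" using jj by simp
  qed
  show ?thesis using D Z N by linarith
qed



lemma ZW_fin:
  assumes "finite R" and "\<And>j. j \<notin> R \<Longrightarrow> Ztil Y (j,-j) v = 0"
  shows "ZW Y W v K = (\<Sum>j\<in>K\<inter>R. W j * Ztil Y (j,-j) v)"
proof -
  have "ZW Y W v K = infsum (\<lambda>j. W j * Ztil Y (j,-j) v) (K\<inter>R)"
    unfolding ZW_def by (rule infsum_cong_neutral) (use assms(2) in auto)
  also have "\<dots> = (\<Sum>j\<in>K\<inter>R. W j * Ztil Y (j,-j) v)" using assms(1) by simp
  finally show ?thesis .
qed

lemma frac_helper: "(0::real) < b \<Longrightarrow> 0 < d \<Longrightarrow> a * d \<le> c * b \<Longrightarrow> a / b \<le> c / d"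
  by (simp add: divide_simps mult.commute)

theorem propositionA4:
  fixes Y :: "pt \<Rightarrow> real" and W :: "int \<Rightarrow> real" and a :: pt and k :: int
  assumes "\<And>z. Y z > 0"
    and "\<And>j. W j > 0"
    and "W 0 = 1"
    and "fst a > 0" and "snd a > 0"
    and "k \<ge> 1"
  shows "(ZW Y W a {j. \<bar>j\<bar> \<le> k} / ZW Y W (a - e1) {j. \<bar>j\<bar> \<le> k}
           \<le> ZW Y W a {j. j \<ge> 0} / ZW Y W (a - e1) {j. j \<ge> 0}) \<and>
         (ZW Y W a {j. \<bar>j\<bar> \<le> k} / ZW Y W (a - e2) {j. \<bar>j\<bar> \<le> k}
           \<ge> ZW Y W a {j. j \<ge> 0} / ZW Y W (a - e2) {j. j \<ge> 0})"
proof -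
  note Y = assms(1)
  obtain p q where a: "a = (p,q)" by force
  have p: "p > 0" and q: "q > 0" using assms(4,5) a by auto
  have ae1: "a - e1 = (p-1, q)" and ae2: "a - e2 = (p, q-1)" by (simp_all add: a e1_def e2_def)
  define R where "R = {-q..p}"
  have finR: "finite R" by (simp add: R_def)
  define A where "A j = Ztil Y (j,-j) (p,q)" for j
  define B where "B j = Ztil Y (j,-j) (p-1,q)" for j
  define C where "C j = Ztil Y (j,-j) (p,q-1)" for j
  have ABC: "A j = Y (p,q) * (B j + C j)" for j
    unfolding A_def B_def C_def using p q by (intro Zrec) simp
  have cr: "C j * B j' \<le> B j * C j'" if "j < j'" for j j'
    using cross2[OF Y, of j j' "p-1" "q-1"] that p q unfolding B_def C_def by simp
  have Bnn: "B j \<ge> 0" and Cnn: "C j \<ge> 0" for j unfolding B_def C_def using Ztil_nonneg Y by auto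
  have Ypq: "Y (p,q) \<ge> 0" using Y less_imp_le by blast
  have mono1: "A j * B j' \<le> A j' * B j" if "j < j'" for j j'
  proof -
    have "Y (p,q) * (B j * B j' + C j * B j') \<le> Y (p,q) * (B j' * B j + B j * C j')"
      using cr[OF that] Ypq by (intro mult_left_mono) (auto simp: mult.commute)
    then show ?thesis unfolding ABC by (simp add: algebra_simps)
  qed
  have mono2: "C j * A j' \<le> C j' * A j" if "j < j'" for j j'
  proof -
    have "Y (p,q) * (C j * B j' + C j * C j') \<le> Y (p,q) * (C j' * B j + C j' * C j)"
      using cr[OF that] Ypq by (intro mult_left_mono) (auto simp: mult.commute)
    then show ?thesis unfolding ABC by (simp add: algebra_simps)
  qed
  have outR: "j \<notin> R \<Longrightarrow> x \<le> p \<Longrightarrow> y \<le> q \<Longrightarrow> Ztil Y (j,-j) (x,y) = 0" for j x y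
    by (rule Zzero) (auto simp: R_def)
  define K1 where "K1 = {j. \<bar>j\<bar> \<le> k} \<inter> R"
  define K2 where "K2 = {j::int. j \<ge> 0} \<inter> R"
  have fin: "finite K1" "finite K2" using finR by (auto simp: K1_def K2_def)
  have ZA: "ZW Y W a K = (\<Sum>j\<in>K\<inter>R. W j * A j)" for K
    unfolding A_def a by (rule ZW_fin[OF finR]) (rule outR, auto)
  have ZB: "ZW Y W (a - e1) K = (\<Sum>j\<in>K\<inter>R. W j * B j)" for K
    unfolding B_def ae1 by (rule ZW_fin[OF finR]) (rule outR, auto)
  have ZC: "ZW Y W (a - e2) K = (\<Sum>j\<in>K\<inter>R. W j * C j)" for K
    unfolding C_def ae2 by (rule ZW_fin[OF finR]) (rule outR, auto)
  have KK: "j \<in> K2 \<and> j' \<in> K1" if "j \<in> K1" "j' \<in> K2" "j' < j" for j j'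
    using that assms(6) by (auto simp: K1_def K2_def)
  have Wnn: "W j \<ge> 0" for j using assms(2) less_imp_le by blast
  have B0: "B 0 > 0" unfolding B_def using p q by (intro Zpos'[OF Y]) auto
  have C0: "C 0 > 0" unfolding C_def using p q by (intro Zpos'[OF Y]) auto
  have 0: "0 \<in> K1" "0 \<in> K2" using p q assms(6) by (auto simp: K1_def K2_def R_def)
  have pos: "(\<Sum>j\<in>K. W j * F j) > 0" if "finite K" "0 \<in> K" "F 0 > 0" "\<And>j. F j \<ge> 0" for K F
  proof -
    have "W 0 * F 0 \<le> (\<Sum>j\<in>K. W j * F j)"
      by (rule member_le_sum) (use that Wnn in auto)
    moreover have "W 0 * F 0 > 0" using that assms(2) by simp
    ultimately show ?thesis by linarith
  qed
  have D1: "(\<Sum>j\<in>K1. W j * B j) > 0" and D2: "(\<Sum>j\<in>K2. W j * B j) > 0"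
    and E1: "(\<Sum>j\<in>K1. W j * C j) > 0" and E2: "(\<Sum>j\<in>K2. W j * C j) > 0"
    using pos fin 0 B0 C0 Bnn Cnn by auto
  have M1: "(\<Sum>j\<in>K1. W j * A j) * (\<Sum>j\<in>K2. W j * B j) \<le> (\<Sum>j\<in>K2. W j * A j) * (\<Sum>j\<in>K1. W j * B j)"
    by (rule mediant[OF fin mono1 KK Wnn]) auto
  have M2: "(\<Sum>j\<in>K1. W j * C j) * (\<Sum>j\<in>K2. W j * A j) \<le> (\<Sum>j\<in>K2. W j * C j) * (\<Sum>j\<in>K1. W j * A j)"
    by (rule mediant[OF fin mono2 KK Wnn]) auto
  have "ZW Y W a {j. \<bar>j\<bar> \<le> k} / ZW Y W (a - e1) {j. \<bar>j\<bar> \<le> k}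
           \<le> ZW Y W a {j. j \<ge> 0} / ZW Y W (a - e1) {j. j \<ge> 0}"
    unfolding ZA ZB K1_def[symmetric] K2_def[symmetric]
    by (rule frac_helper[OF D1 D2 M1])
  moreover have "ZW Y W a {j. \<bar>j\<bar> \<le> k} / ZW Y W (a - e2) {j. \<bar>j\<bar> \<le> k}
           \<ge> ZW Y W a {j. j \<ge> 0} / ZW Y W (a - e2) {j. j \<ge> 0}"
    unfolding ZA ZC K1_def[symmetric] K2_def[symmetric]
    by (rule frac_helper[OF E2 E1]) (use M2 in \<open>simp add: mult.commute\<close>)
  ultimately show ?thesis by blast
qed

end
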